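(* Let $P$ be a finite graded poset with rank levels $P_1,\dots,P_d$ and full rank lower ideals $L_j=P_1\sqcup\cdots\sqcup P_j$ ($0\le j\le d$, $L_0=\emptyset$). Let $m\ge1$ and identify a lower ideal $I$ of $[m]\times P$ with $(I_1,\dots,I_m)$, $I_j=\{a\in P:(j,a)\in I\}$; call it full rank if every $I_j$ is one of $L_0,\dots,L_d$. Then a lower ideal $(I_1,\dots,I_m)$ of $[m]\times P$ is full rank if and only if every lower ideal in its orbit under $\mathfrak{X}_{[m]\times P}$ is full rank.
   Context: A finite poset is graded if all maximal chains have the same length; the rank function $r$ has minimal elements of rank $1$ and $r(x)=r(y)+1$ when $x$ covers $y$; $P_j=r^{-1}(j)$. $[m]\times P$ carries the product order. For a finite poset $Q$ and a lower ideal $I$, $\mathfrak{X}_Q(I)=\{y\in Q:y\le x\text{ for some }x\in\min(Q\setminus I)\}$; this is a bijection on lower ideals. *)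

theory Defs
  imports Main
begin

definition poset_on :: "'a set \<Rightarrow> ('a \<Rightarrow> 'a \<Rightarrow> bool) \<Rightarrow> bool" where
  "poset_on P le \<longleftrightarrow>
     (\<forall>x\<in>P. le x x) \<and>
     (\<forall>x\<in>P. \<forall>y\<in>P. le x y \<and> le y x \<longrightarrow> x = y) \<and>
     (\<forall>x\<in>P. \<forall>y\<in>P. \<forall>z\<in>P. le x y \<and> le y z \<longrightarrow> le x z)"

definition chain_in :: "'a set \<Rightarrow> ('a \<Rightarrow> 'a \<Rightarrow> bool) \<Rightarrow> 'a set \<Rightarrow> bool" where
  "chain_in P le C \<longleftrightarrow> C \<subseteq> P \<and> (\<forall>x\<in>C. \<forall>y\<in>C. le x y \<or> le y x)"

definition maximal_chain :: "'a set \<Rightarrow> ('a \<Rightarrow> 'a \<Rightarrow> bool) \<Rightarrow> 'a set \<Rightarrow> bool" where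
  "maximal_chain P le C \<longleftrightarrow> chain_in P le C \<and> (\<forall>D. chain_in P le D \<and> C \<subseteq> D \<longrightarrow> D = C)"

definition graded :: "'a set \<Rightarrow> ('a \<Rightarrow> 'a \<Rightarrow> bool) \<Rightarrow> bool" where
  "graded P le \<longleftrightarrow>
     (\<forall>C D. maximal_chain P le C \<and> maximal_chain P le D \<longrightarrow> card C = card D)"

definition minimals :: "('a \<Rightarrow> 'a \<Rightarrow> bool) \<Rightarrow> 'a set \<Rightarrow> 'a set" where
  "minimals le S = {x\<in>S. \<forall>y\<in>S. le y x \<longrightarrow> y = x}"

definition covers :: "'a set \<Rightarrow> ('a \<Rightarrow> 'a \<Rightarrow> bool) \<Rightarrow> 'a \<Rightarrow> 'a \<Rightarrow> bool" where
  "covers P le x y \<longleftrightarrow> x \<in> P \<and> y \<in> P \<and> le y x \<and> x \<noteq> y \<and>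
     (\<forall>z\<in>P. le y z \<and> le z x \<longrightarrow> z = y \<or> z = x)"

definition is_rank_function :: "'a set \<Rightarrow> ('a \<Rightarrow> 'a \<Rightarrow> bool) \<Rightarrow> ('a \<Rightarrow> nat) \<Rightarrow> bool" where
  "is_rank_function P le r \<longleftrightarrow>
     (\<forall>x\<in>minimals le P. r x = 1) \<and>
     (\<forall>x\<in>P. \<forall>y\<in>P. covers P le x y \<longrightarrow> r x = r y + 1)"

definition rank_of :: "'a set \<Rightarrow> ('a \<Rightarrow> nat) \<Rightarrow> nat" where
  "rank_of P r = Max (insert 0 (r ` P))"

definition full_rank_ideal :: "'a set \<Rightarrow> ('a \<Rightarrow> nat) \<Rightarrow> nat \<Rightarrow> 'a set" where
  "full_rank_ideal P r j = {x\<in>P. r x \<le> j}"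

definition lower_ideal :: "'a set \<Rightarrow> ('a \<Rightarrow> 'a \<Rightarrow> bool) \<Rightarrow> 'a set \<Rightarrow> bool" where
  "lower_ideal Q le I \<longleftrightarrow> I \<subseteq> Q \<and> (\<forall>x\<in>I. \<forall>y\<in>Q. le y x \<longrightarrow> y \<in> I)"

definition rowX :: "'a set \<Rightarrow> ('a \<Rightarrow> 'a \<Rightarrow> bool) \<Rightarrow> 'a set \<Rightarrow> 'a set" where
  "rowX Q le I = {y\<in>Q. \<exists>x\<in>minimals le (Q - I). le y x}"

definition prod_carrier :: "nat \<Rightarrow> 'a set \<Rightarrow> (nat \<times> 'a) set" where
  "prod_carrier m P = {1..m} \<times> P"

definition prod_le :: "('a \<Rightarrow> 'a \<Rightarrow> bool) \<Rightarrow> nat \<times> 'a \<Rightarrow> nat \<times> 'a \<Rightarrow> bool" where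
  "prod_le le p q \<longleftrightarrow> fst p \<le> fst q \<and> le (snd p) (snd q)"

definition slice :: "(nat \<times> 'a) set \<Rightarrow> nat \<Rightarrow> 'a set" where
  "slice I j = {a. (j, a) \<in> I}"

definition full_rank :: "nat \<Rightarrow> 'a set \<Rightarrow> ('a \<Rightarrow> nat) \<Rightarrow> (nat \<times> 'a) set \<Rightarrow> bool" where
  "full_rank m P r I \<longleftrightarrow>
     (\<forall>j\<in>{1..m}. \<exists>k\<le>rank_of P r. slice I j = full_rank_ideal P r k)"

end

theory Submission
  imports Defs
begin

locale rk =
  fixes P :: "'a set" and le :: "'a \<Rightarrow> 'a \<Rightarrow> bool" and r :: "'a \<Rightarrow> nat"
  assumes fin: "finite P" and po: "poset_on P le" and rf: "is_rank_function P le r"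
begin

lemma refl: "x\<in>P \<Longrightarrow> le x x" using po unfolding poset_on_def by blast
lemma antisym: "x\<in>P \<Longrightarrow> y\<in>P \<Longrightarrow> le x y \<Longrightarrow> le y x \<Longrightarrow> x = y"
  using po unfolding poset_on_def by blast
lemma trans: "x\<in>P \<Longrightarrow> y\<in>P \<Longrightarrow> z\<in>P \<Longrightarrow> le x y \<Longrightarrow> le y z \<Longrightarrow> le x z"
  using po unfolding poset_on_def by blast
lemma min1: "x \<in> minimals le P \<Longrightarrow> r x = 1"
  using rf unfolding is_rank_function_def by blast
lemma cov: "covers P le x y \<Longrightarrow> r x = r y + 1"
  using rf unfolding is_rank_function_def covers_def by blast

lemma strict_aux: "\<forall>x y. card {z\<in>P. le x z \<and> le z y} = n \<longrightarrow> x\<in>P \<longrightarrow> y\<in>P \<longrightarrow> le x y \<longrightarrow> x \<noteq> y \<longrightarrow> r x < r y"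
proof (induction n rule: less_induct)
  case (less n)
  show ?case
  proof (intro allI impI)
    fix x y assume h: "card {z\<in>P. le x z \<and> le z y} = n" "x\<in>P" "y\<in>P" "le x y" "x\<noteq>y"
    show "r x < r y"
    proof (cases "covers P le y x")
      case True then show ?thesis using cov by fastforce
    next
      case False
      then obtain z where z: "z\<in>P" "le x z" "le z y" "z \<noteq> x" "z \<noteq> y"
        using h unfolding covers_def by blast
      have fin1: "finite {w\<in>P. le x w \<and> le w y}" using fin by simp
      have sub1: "{w\<in>P. le x w \<and> le w z} \<subseteq> {w\<in>P. le x w \<and> le w y}"
        using trans z h by blast
      have m1: "y \<in> {w\<in>P. le x w \<and> le w y}" using h refl by simp
      have n1: "y \<notin> {w\<in>P. le x w \<and> le w z}" using antisym z h by blast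
      have s1: "{w\<in>P. le x w \<and> le w z} \<subset> {w\<in>P. le x w \<and> le w y}" using sub1 m1 n1 by blast
      have "card {w\<in>P. le x w \<and> le w z} < n" using psubset_card_mono[OF fin1 s1] h(1) by simp
      then have 1: "r x < r z" using less.IH z h by blast
      have sub2: "{w\<in>P. le z w \<and> le w y} \<subseteq> {w\<in>P. le x w \<and> le w y}"
        using trans z h by blast
      have m2: "x \<in> {w\<in>P. le x w \<and> le w y}" using h refl by simp
      have n2: "x \<notin> {w\<in>P. le z w \<and> le w y}" using antisym z h by blast
      have s2: "{w\<in>P. le z w \<and> le w y} \<subset> {w\<in>P. le x w \<and> le w y}" using sub2 m2 n2 by blast
      have "card {w\<in>P. le z w \<and> le w y} < n" using psubset_card_mono[OF fin1 s2] h(1) by simp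
      then have 2: "r z < r y" using less.IH z h by blast
      show ?thesis using 1 2 by simp
    qed
  qed
qed

lemma strict: "x\<in>P \<Longrightarrow> y\<in>P \<Longrightarrow> le x y \<Longrightarrow> x\<noteq>y \<Longrightarrow> r x < r y"
  using strict_aux by blast

lemma mono: "x\<in>P \<Longrightarrow> y\<in>P \<Longrightarrow> le x y \<Longrightarrow> r x \<le> r y"
  by (cases "x = y") (auto dest: strict)

lemma ge1: assumes x: "x\<in>P" shows "1 \<le> r x"
proof -
  let ?S = "{z\<in>P. le z x}"
  have fS: "finite ?S" using fin by simp
  have ne: "x\<in>?S" using x refl by simp
  have "Min (r`?S) \<in> r`?S" using Min_in[of "r`?S"] fS ne by blast
  then obtain c where c: "c\<in>?S" "r c = Min (r`?S)" by force
  have cmin: "\<forall>z\<in>?S. r c \<le> r z" using c fS by simp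
  have cP: "c\<in>P" using c by simp
  have "\<forall>y\<in>P. le y c \<longrightarrow> y = c"
  proof (intro ballI impI)
    fix y assume y: "y\<in>P" "le y c"
    then have "le y x" using trans c x by blast
    then have "r c \<le> r y" using cmin y by simp
    then show "y = c" using strict[of y c] y cP by fastforce
  qed
  then have "c \<in> minimals le P" using cP unfolding minimals_def by simp
  then have "r c = 1" using min1 by simp
  moreover have "r c \<le> r x" using mono[OF cP x] c by simp
  ultimately show ?thesis by simp
qed

lemma down: assumes x: "x\<in>P" and g: "1 < r x"
  shows "\<exists>c\<in>P. le c x \<and> c \<noteq> x \<and> r x = r c + 1"
proof -
  have "x \<notin> minimals le P" using min1 g by fastforce
  then obtain y where y: "y\<in>P" "le y x" "y \<noteq> x" using x unfolding minimals_def by blast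
  let ?S = "{z\<in>P. le z x \<and> z \<noteq> x}"
  have fS: "finite ?S" using fin by simp
  have ne: "y\<in>?S" using y by simp
  have "Max (r`?S) \<in> r`?S" using Max_in[of "r`?S"] fS ne by blast
  then obtain c where c: "c\<in>?S" "r c = Max (r`?S)" by force
  have cmax: "\<forall>z\<in>?S. r z \<le> r c" using c fS by simp
  have "covers P le x c" unfolding covers_def
  proof (intro conjI ballI impI)
    fix z assume z: "z\<in>P" "le c z \<and> le z x"
    show "z = c \<or> z = x"
    proof (rule ccontr)
      assume "\<not> (z = c \<or> z = x)"
      then have "z\<in>?S" "z \<noteq> c" using z by auto
      then show False using cmax strict[of c z] c z by fastforce
    qed
  qed (use x c in auto)
  then show ?thesis using cov c by auto
qed

lemma up: assumes x: "x\<in>P" and y: "y\<in>P" "le x y" "x\<noteq>y"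
  shows "\<exists>c\<in>P. le x c \<and> r c = r x + 1"
proof -
  let ?S = "{z\<in>P. le x z \<and> z \<noteq> x}"
  have fS: "finite ?S" using fin by simp
  have ne: "y\<in>?S" using y by simp
  have "Min (r`?S) \<in> r`?S" using Min_in[of "r`?S"] fS ne by blast
  then obtain c where c: "c\<in>?S" "r c = Min (r`?S)" by force
  have cmin: "\<forall>z\<in>?S. r c \<le> r z" using c fS by simp
  have "covers P le c x" unfolding covers_def
  proof (intro conjI ballI impI)
    fix z assume z: "z\<in>P" "le x z \<and> le z c"
    show "z = x \<or> z = c"
    proof (rule ccontr)
      assume "\<not> (z = x \<or> z = c)"
      then have "z\<in>?S" "z \<noteq> c" using z by auto
      then show False using cmin strict[of z c] c z by fastforce
    qed
  qed (use x c in auto)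
  then show ?thesis using cov c by auto
qed

lemma chain_ex: "\<forall>x\<in>P. r x = n \<longrightarrow> (\<exists>f. f n = x \<and> (\<forall>i\<in>{1..n}. f i \<in> P \<and> r (f i) = i)
   \<and> (\<forall>i. 1 \<le> i \<longrightarrow> i < n \<longrightarrow> covers P le (f (Suc i)) (f i)) \<and> f 1 \<in> minimals le P)"
proof (induction n)
  case 0 then show ?case using ge1 by fastforce
next
  case (Suc n)
  show ?case
  proof (intro ballI impI)
    fix x assume x: "x\<in>P" "r x = Suc n"
    show "\<exists>f. f (Suc n) = x \<and> (\<forall>i\<in>{1..Suc n}. f i \<in> P \<and> r (f i) = i)
   \<and> (\<forall>i. 1 \<le> i \<longrightarrow> i < Suc n \<longrightarrow> covers P le (f (Suc i)) (f i)) \<and> f 1 \<in> minimals le P"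
    proof (cases "n = 0")
      case True
      have "\<forall>y\<in>P. le y x \<longrightarrow> y = x"
      proof (intro ballI impI)
        fix y assume y: "y\<in>P" "le y x"
        show "y = x"
        proof (rule ccontr)
          assume "y \<noteq> x"
          then have "r y < r x" using strict y x by blast
          then show False using ge1[OF y(1)] x True by simp
        qed
      qed
      then have "x \<in> minimals le P" using x unfolding minimals_def by simp
      then show ?thesis using True x by (intro exI[of _ "\<lambda>_. x"]) auto
    next
      case False
      obtain c where c: "c\<in>P" "le c x" "c\<noteq>x" "r x = r c + 1" using down x False by force
      have rc: "r c = n" using c x by simp
      have cv: "covers P le x c" unfolding covers_def
      proof (intro conjI ballI impI)
        fix z assume z: "z\<in>P" "le c z \<and> le z x"
        show "z = c \<or> z = x"
        proof (rule ccontr)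
          assume "\<not> (z = c \<or> z = x)"
          then have "r c < r z" "r z < r x" using strict z c x by (metis, metis)
          then show False using c by simp
        qed
      qed (use x c in auto)
      obtain f where f: "f n = c" "\<forall>i\<in>{1..n}. f i \<in> P \<and> r (f i) = i"
        "\<forall>i. 1 \<le> i \<longrightarrow> i < n \<longrightarrow> covers P le (f (Suc i)) (f i)" "f 1 \<in> minimals le P"
        using Suc.IH c rc by blast
      define g where "g = f(Suc n := x)"
      have "g (Suc n) = x" unfolding g_def by simp
      moreover have "\<forall>i\<in>{1..Suc n}. g i \<in> P \<and> r (g i) = i"
        using f(2) x unfolding g_def by (auto simp: le_Suc_eq)
      moreover have "\<forall>i. 1 \<le> i \<longrightarrow> i < Suc n \<longrightarrow> covers P le (g (Suc i)) (g i)"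
      proof (intro allI impI)
        fix i assume i: "1 \<le> i" "i < Suc n"
        show "covers P le (g (Suc i)) (g i)"
        proof (cases "i = n")
          case True then show ?thesis using cv f(1) unfolding g_def by simp
        next
          case False then show ?thesis using f(3) i unfolding g_def by simp
        qed
      qed
      moreover have "g 1 \<in> minimals le P" using f(4) False unfolding g_def by simp
      ultimately show ?thesis by blast
    qed
  qed
qed

lemma chain_le:
  assumes cv: "\<forall>i. 1 \<le> i \<longrightarrow> i < n \<longrightarrow> covers P le (f (Suc i)) (f i)"
    and inP: "\<forall>i\<in>{1..n}. f i \<in> P"
  shows "1 \<le> i \<Longrightarrow> i \<le> j \<Longrightarrow> j \<le> n \<Longrightarrow> le (f i) (f j)"
proof (induction j)
  case 0 then show ?case by simp
next
  case (Suc j)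
  show ?case
  proof (cases "i = Suc j")
    case True then show ?thesis using refl inP Suc by auto
  next
    case False
    then have ij: "i \<le> j" using Suc by simp
    then have 1: "le (f i) (f j)" using Suc by simp
    have "covers P le (f (Suc j)) (f j)" using cv Suc ij by simp
    then have 2: "le (f j) (f (Suc j))" unfolding covers_def by blast
    show ?thesis using trans[OF _ _ _ 1 2] inP Suc ij by simp
  qed
qed

lemma chain_max:
  assumes fn: "f n = x" and n1: "1 \<le> n"
    and inP: "\<forall>i\<in>{1..n}. f i \<in> P"
    and cv: "\<forall>i. 1 \<le> i \<longrightarrow> i < n \<longrightarrow> covers P le (f (Suc i)) (f i)"
    and mn: "f 1 \<in> minimals le P"
    and xmax: "\<forall>y\<in>P. le x y \<longrightarrow> y = x"
  shows "maximal_chain P le (f ` {1..n})"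
proof -
  have ch: "chain_in P le (f ` {1..n})"
    unfolding chain_in_def
  proof (intro conjI ballI)
    show "f ` {1..n} \<subseteq> P" using inP by auto
  next
    fix a b assume "a \<in> f ` {1..n}" "b \<in> f ` {1..n}"
    then obtain i j where "i\<in>{1..n}" "j\<in>{1..n}" "a = f i" "b = f j" by blast
    then show "le a b \<or> le b a" using chain_le[OF cv inP, of i j] chain_le[OF cv inP, of j i]
      by (cases "i \<le> j") auto
  qed
  have "\<forall>D. chain_in P le D \<and> f ` {1..n} \<subseteq> D \<longrightarrow> D = f ` {1..n}"
  proof (intro allI impI)
    fix D assume D: "chain_in P le D \<and> f ` {1..n} \<subseteq> D"
    have "D \<subseteq> f ` {1..n}"
    proof
      fix z assume zD: "z \<in> D"
      have zP: "z\<in>P" using zD D unfolding chain_in_def by blast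
      have comp: "\<And>w. w \<in> D \<Longrightarrow> le z w \<or> le w z" using zD D unfolding chain_in_def by blast
      have claim: "\<forall>i. 1 \<le> i \<longrightarrow> i \<le> n \<longrightarrow> le z (f i) \<longrightarrow> z \<in> f ` {1..n}"
      proof (intro allI)
        fix i show "1 \<le> i \<longrightarrow> i \<le> n \<longrightarrow> le z (f i) \<longrightarrow> z \<in> f ` {1..n}"
        proof (induction i)
          case 0 then show ?case by simp
        next
          case (Suc i)
          show ?case
          proof (intro impI)
            assume h: "1 \<le> Suc i" "Suc i \<le> n" "le z (f (Suc i))"
            show "z \<in> f ` {1..n}"
            proof (cases "i = 0")
              case True
              then have "z = f 1" using mn zP h unfolding minimals_def by auto
              then show ?thesis using n1 by auto
            next
              case False
              have fiD: "f i \<in> D" using D False h by auto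
              have cvi: "covers P le (f (Suc i)) (f i)" using cv False h by simp
              from comp[OF fiD] show ?thesis
              proof
                assume "le z (f i)" then show ?thesis using Suc.IH False h by simp
              next
                assume "le (f i) z"
                then have "z = f i \<or> z = f (Suc i)" using cvi zP h unfolding covers_def by blast
                then show ?thesis using False h by auto
              qed
            qed
          qed
        qed
      qed
      have xD: "x \<in> D" using D fn n1 by auto
      from comp[OF xD] show "z \<in> f ` {1..n}"
      proof
        assume "le z x" then show ?thesis using claim fn n1 by auto
      next
        assume "le x z" then have "z = x" using xmax zP by blast
        then show ?thesis using fn n1 by auto
      qed
    qed
    then show "D = f ` {1..n}" using D by blast
  qed
  then show ?thesis using ch unfolding maximal_chain_def by blast
qed

lemma chain_card:
  assumes "\<forall>i\<in>{1..n}. f i \<in> P \<and> r (f i) = i"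
  shows "card (f ` {1..n}) = n"
proof -
  have "inj_on f {1..n}" unfolding inj_on_def using assms by metis
  then show ?thesis by (simp add: card_image)
qed

lemma maxchain_of: assumes x: "x\<in>P" and xmax: "\<forall>y\<in>P. le x y \<longrightarrow> y = x"
  shows "\<exists>C. maximal_chain P le C \<and> card C = r x"
proof -
  obtain f where f: "f (r x) = x" "\<forall>i\<in>{1..r x}. f i \<in> P \<and> r (f i) = i"
    "\<forall>i. 1 \<le> i \<longrightarrow> i < r x \<longrightarrow> covers P le (f (Suc i)) (f i)" "f 1 \<in> minimals le P"
    using chain_ex x by blast
  have "maximal_chain P le (f ` {1..r x})"
    using chain_max[OF f(1) ge1[OF x] _ f(3) f(4) xmax] f(2) by blast
  moreover have "card (f ` {1..r x}) = r x" using chain_card f(2) by blast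
  ultimately show ?thesis by blast
qed

lemma le_rank: "x\<in>P \<Longrightarrow> r x \<le> rank_of P r"
  unfolding rank_of_def using fin by simp

lemma maxrank: assumes g: "graded P le" and x: "x\<in>P" and xmax: "\<forall>y\<in>P. le x y \<longrightarrow> y = x"
  shows "r x = rank_of P r"
proof -
  have ne: "r ` P \<noteq> {}" using x by blast
  have "Max (r`P) \<in> r`P" using Max_in[OF _ ne] fin by blast
  then obtain w where w: "w\<in>P" "r w = Max (r`P)" by force
  have wmax: "\<forall>y\<in>P. r y \<le> r w" using w fin by simp
  have wm: "\<forall>y\<in>P. le w y \<longrightarrow> y = w"
    using wmax strict w by fastforce
  have rw: "rank_of P r = r w" unfolding rank_of_def
  proof (rule Max_eqI)
    show "finite (insert 0 (r ` P))" using fin by simp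
    show "r w \<in> insert 0 (r ` P)" using w(1) by simp
    fix y assume "y \<in> insert 0 (r ` P)" then show "y \<le> r w" using wmax by auto
  qed
  obtain C where C: "maximal_chain P le C" "card C = r x" using maxchain_of x xmax by blast
  obtain D where D: "maximal_chain P le D" "card D = r w" using maxchain_of w wm by blast
  have "card C = card D" using g C D unfolding graded_def by blast
  then show ?thesis using C D rw by simp
qed

lemma up2: assumes g: "graded P le" and x: "x\<in>P" and lt: "r x < rank_of P r"
  shows "\<exists>c\<in>P. le x c \<and> r c = r x + 1"
proof -
  have "\<not> (\<forall>y\<in>P. le x y \<longrightarrow> y = x)" using maxrank g x lt by fastforce
  then obtain y where "y\<in>P" "le x y" "y \<noteq> x" by blast
  then show ?thesis using up x by blast
qed

lemma lift_aux: assumes g: "graded P le" and b: "b\<in>P"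
  shows "\<forall>t. t = r b + n \<longrightarrow> t \<le> rank_of P r \<longrightarrow> (\<exists>a\<in>P. le b a \<and> r a = t)"
proof (induction n)
  case 0 then show ?case using b refl by auto
next
  case (Suc n)
  show ?case
  proof (intro allI impI)
    fix t assume t: "t = r b + Suc n" "t \<le> rank_of P r"
    obtain a where a: "a\<in>P" "le b a" "r a = r b + n" using Suc t by fastforce
    obtain c where c: "c\<in>P" "le a c" "r c = r a + 1" using up2[OF g a(1)] a t by fastforce
    show "\<exists>a\<in>P. le b a \<and> r a = t" using c a t trans[OF b a(1) c(1) a(2) c(2)] by auto
  qed
qed

lemma lift: "graded P le \<Longrightarrow> b\<in>P \<Longrightarrow> r b \<le> t \<Longrightarrow> t \<le> rank_of P r \<Longrightarrow> \<exists>a\<in>P. le b a \<and> r a = t"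
  using lift_aux[of b "t - r b"] by simp

lemma prod_trans: "p \<in> prod_carrier m P \<Longrightarrow> q \<in> prod_carrier m P \<Longrightarrow> s \<in> prod_carrier m P \<Longrightarrow>
   prod_le le p q \<Longrightarrow> prod_le le q s \<Longrightarrow> prod_le le p s"
  unfolding prod_le_def prod_carrier_def using trans by (auto simp: mem_Times_iff)

lemma rowX_lower: "lower_ideal (prod_carrier m P) (prod_le le) (rowX (prod_carrier m P) (prod_le le) J)"
  unfolding lower_ideal_def
proof (intro conjI ballI impI)
  show "rowX (prod_carrier m P) (prod_le le) J \<subseteq> prod_carrier m P" unfolding rowX_def by auto
next
  fix x y assume x: "x \<in> rowX (prod_carrier m P) (prod_le le) J" and y: "y \<in> prod_carrier m P"
    and yx: "prod_le le y x"
  from x obtain z where z: "z \<in> minimals (prod_le le) (prod_carrier m P - J)" "prod_le le x z"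
    and xQ: "x \<in> prod_carrier m P" unfolding rowX_def by blast
  have zQ: "z \<in> prod_carrier m P" using z unfolding minimals_def by blast
  have "prod_le le y z" using prod_trans[OF y xQ zQ yx z(2)] .
  then show "y \<in> rowX (prod_carrier m P) (prod_le le) J" using y z unfolding rowX_def by blast
qed

lemma KL:
  assumes J: "lower_ideal (prod_carrier m P) (prod_le le) J"
  and kf: "\<forall>j\<in>{1..m}. slice J j = full_rank_ideal P r (kf j)"
  and ja: "(j,a) \<in> minimals (prod_le le) (prod_carrier m P - J)"
  and a': "a'\<in>P" "r a' = r a"
  shows "(j,a') \<in> minimals (prod_le le) (prod_carrier m P - J)"
proof -
  from ja have j: "j\<in>{1..m}" "a\<in>P" "(j,a) \<notin> J"
    and minj: "\<forall>q\<in>prod_carrier m P - J. prod_le le q (j,a) \<longrightarrow> q = (j,a)"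
    unfolding minimals_def prod_carrier_def by auto
  have memJ: "(jj,x)\<in>J \<longleftrightarrow> x \<in> P \<and> r x \<le> kf jj" if jj: "jj\<in>{1..m}" for jj x
  proof -
    have "slice J jj = full_rank_ideal P r (kf jj)" using kf jj by blast
    then have "x \<in> slice J jj \<longleftrightarrow> x \<in> full_rank_ideal P r (kf jj)" by simp
    then show ?thesis unfolding slice_def full_rank_ideal_def by simp
  qed
  have gt: "kf j < r a" using memJ[OF j(1)] j by auto
  have le1: "r a \<le> kf j + 1"
  proof (cases "1 < r a")
    case True
    obtain c where c: "c\<in>P" "le c a" "c\<noteq>a" "r a = r c + 1" using down j True by blast
    have "(j,c) \<in> prod_carrier m P" using j c by (simp add: prod_carrier_def)
    moreover have "prod_le le (j,c) (j,a)" using c by (simp add: prod_le_def)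
    moreover have "(j,c) \<noteq> (j,a)" using c by simp
    ultimately have "(j,c) \<in> J" using minj by blast
    then have "r c \<le> kf j" using memJ[OF j(1)] by blast
    then show ?thesis using c by simp
  next
    case False then show ?thesis by simp
  qed
  show ?thesis unfolding minimals_def
  proof (intro CollectI conjI ballI impI)
    show "(j,a') \<in> prod_carrier m P - J" using j a' memJ[OF j(1)] gt by (auto simp: prod_carrier_def)
  next
    fix q assume q: "q \<in> prod_carrier m P - J" "prod_le le q (j,a')"
    obtain j' b where qq: "q = (j',b)" by (cases q)
    have h: "j'\<in>{1..m}" "b\<in>P" "(j',b)\<notin>J" "j' \<le> j" "le b a'"
      using q qq by (auto simp: prod_carrier_def prod_le_def)
    have rb: "r b \<le> r a'" using mono h a' by blast
    show "q = (j,a')"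
    proof (cases "j' = j")
      case True
      then have "kf j < r b" using memJ[OF j(1)] h by auto
      then have "r b = r a'" using rb le1 a' by simp
      then have "b = a'" using strict[of b a'] h a' by fastforce
      then show ?thesis using qq True by simp
    next
      case False
      then have jj: "j' < j" "2 \<le> j" using h by auto
      have j1: "j-1 \<in> {1..m}" using jj j by auto
      have "(j-1,a) \<in> prod_carrier m P" using j1 j by (simp add: prod_carrier_def)
      moreover have "prod_le le (j-1,a) (j,a)" using refl j by (simp add: prod_le_def)
      moreover have "(j-1,a) \<noteq> (j,a)" using jj by simp
      ultimately have "(j-1,a) \<in> J" using minj by blast
      then have "r a \<le> kf (j-1)" using memJ[OF j1] by blast
      then have "(j-1,b) \<in> J" using memJ[OF j1] h rb a' by simp
      moreover have "(j',b) \<in> prod_carrier m P" using h by (simp add: prod_carrier_def)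
      moreover have "prod_le le (j',b) (j-1,b)" using refl h jj by (simp add: prod_le_def)
      ultimately have "(j',b) \<in> J" using J unfolding lower_ideal_def by blast
      then show ?thesis using h by simp
    qed
  qed
qed

lemma step:
  assumes g: "graded P le" and J: "lower_ideal (prod_carrier m P) (prod_le le) J"
    and fr: "full_rank m P r J"
  shows "full_rank m P r (rowX (prod_carrier m P) (prod_le le) J)"
proof -
  obtain kf where kf: "\<forall>j\<in>{1..m}. kf j \<le> rank_of P r \<and> slice J j = full_rank_ideal P r (kf j)"
    using fr unfolding full_rank_def by metis
  have kf2: "\<forall>j\<in>{1..m}. slice J j = full_rank_ideal P r (kf j)" using kf by blast
  show ?thesis unfolding full_rank_def
  proof
    fix i assume i: "i\<in>{1..m}"
    define M where "M = minimals (prod_le le) (prod_carrier m P - J)"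
    define T where "T = {r a | j a. (j,a) \<in> M \<and> i \<le> j}"
    have Msub: "M \<subseteq> prod_carrier m P" unfolding M_def minimals_def by auto
    have sl: "slice (rowX (prod_carrier m P) (prod_le le) J) i = {b\<in>P. \<exists>j a. (j,a)\<in>M \<and> i \<le> j \<and> le b a}"
      unfolding slice_def rowX_def M_def[symmetric] using i by (auto simp: prod_carrier_def prod_le_def) (fastforce, metis fst_conv snd_conv)
    have TP: "T \<subseteq> r ` P" using Msub unfolding T_def prod_carrier_def by auto
    have finT: "finite T" using TP fin finite_subset by blast
    show "\<exists>k\<le>rank_of P r. slice (rowX (prod_carrier m P) (prod_le le) J) i = full_rank_ideal P r k"
    proof (cases "T = {}")
      case True
      then have "slice (rowX (prod_carrier m P) (prod_le le) J) i = {}" unfolding sl T_def by blast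
      moreover have "full_rank_ideal P r 0 = {}" using ge1 unfolding full_rank_ideal_def by fastforce
      ultimately show ?thesis by (intro exI[of _ 0]) simp
    next
      case False
      define t where "t = Max T"
      have "t \<in> T" using Max_in[OF finT False] t_def by simp
      then obtain j a where ja: "(j,a)\<in>M" "i \<le> j" "r a = t" unfolding T_def by blast
      have aP: "a\<in>P" using ja Msub by (auto simp: prod_carrier_def)
      have tle: "t \<le> rank_of P r" using le_rank[OF aP] ja(3) by simp
      have "slice (rowX (prod_carrier m P) (prod_le le) J) i = full_rank_ideal P r t"
        unfolding sl full_rank_ideal_def
      proof (intro equalityI subsetI)
        fix b assume "b \<in> {b\<in>P. \<exists>j a. (j,a)\<in>M \<and> i \<le> j \<and> le b a}"
        then obtain j' a' where b: "b\<in>P" "(j',a')\<in>M" "i \<le> j'" "le b a'" by blast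
        have "a'\<in>P" using b Msub by (auto simp: prod_carrier_def)
        then have "r b \<le> r a'" using mono b by blast
        moreover have "r a' \<in> T" using b unfolding T_def by blast
        then have "r a' \<le> t" using finT t_def by simp
        ultimately show "b \<in> {x\<in>P. r x \<le> t}" using b by simp
      next
        fix b assume "b \<in> {x\<in>P. r x \<le> t}"
        then have b: "b\<in>P" "r b \<le> t" by auto
        obtain a' where a': "a'\<in>P" "le b a'" "r a' = t" using lift[OF g b tle] by blast
        have "(j,a')\<in>M" using KL[OF J kf2 _ a'(1)] ja a' unfolding M_def by simp
        then show "b \<in> {b\<in>P. \<exists>j a. (j,a)\<in>M \<and> i \<le> j \<and> le b a}" using b a' ja by blast
      qed
      with tle show ?thesis by blast
    qed
  qed
qed

end

theorem lemma2p6: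
  fixes P :: "'a set" and le :: "'a \<Rightarrow> 'a \<Rightarrow> bool" and r :: "'a \<Rightarrow> nat"
    and m :: nat and I :: "(nat \<times> 'a) set"
  assumes "finite P" and "poset_on P le" and "graded P le"
    and "is_rank_function P le r"
    and "m \<ge> 1"
    and "lower_ideal (prod_carrier m P) (prod_le le) I"
  shows "full_rank m P r I \<longleftrightarrow>
    (\<forall>k::nat. full_rank m P r ((rowX (prod_carrier m P) (prod_le le) ^^ k) I))"
proof -
  interpret rk P le r using assms by unfold_locales
  let ?F = "rowX (prod_carrier m P) (prod_le le)"
  show ?thesis
  proof
    assume fr: "full_rank m P r I"
    have "lower_ideal (prod_carrier m P) (prod_le le) ((?F^^k) I) \<and> full_rank m P r ((?F^^k) I)" for k
    proof (induction k)
      case 0 then show ?case using fr assms(6) by simp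
    next
      case (Suc k) then show ?case using step[OF assms(3)] rowX_lower by simp
    qed
    then show "\<forall>k. full_rank m P r ((?F^^k) I)" by blast
  next
    assume "\<forall>k. full_rank m P r ((?F^^k) I)"
    then show "full_rank m P r I" by (metis funpow_0)
  qed
qed

end
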